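(* Let $a,b\ge0$, let $n$ be a measure on $(0,\infty)$ with $\int_0^\infty\min\{y^2,y\}n(dy)<\infty$, set $\tilde n(dy)=n([y,\infty))\,dy$, and let $$\Phi(\lambda)=\int_0^\lambda\frac{du}{au+b+\int_0^\infty(1-e^{-uy})\tilde n(dy)}.$$ Suppose $\Phi(1)<\infty$. Then for each $\delta>0$ and all $f,g\in\mathcal{F}_0$, $$\mathcal{E}^\delta(f,g)=a\int xf'(x)g'(x)\,\nu_\delta(dx)+\int x\int_0^\infty\tilde n(dy)\,f'(x+y)\big(g(x+y)-g(x)\big)\,\nu_\delta(dx).$$
   Context: For $\delta>0$, the CBCI-process with quadruplet $(a,b,n,\delta)$ is the Markov process on $\mathbb{R}_+$ with generator $L_\delta f(x)=axf''(x)-bxf'(x)+x\int_0^\infty[f(x+y)-f(x)-yf'(x)]n(dy)+\delta f'(x)$. When $\Phi(1)<\infty$ it has a unique stationary distribution $\nu_\delta$, given by $\int e^{-\lambda x}\nu_\delta(dx)=e^{-\delta\Phi(\lambda)}$. $\mathcal{E}^\delta(f,g)=\int(-L_\delta f)g\,d\nu_\delta$. $\mathcal{F}_0$ is the linear span of the functions $x\mapsto e^{-\lambda x}$, $\lambda\ge0$. *)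

theory Defs
  imports "HOL-Probability.Probability"
begin

definition ntilde :: "real measure \<Rightarrow> real measure" where
  "ntilde n = density lborel (\<lambda>y. indicator {0<..} y * emeasure n {y..})"

definition Phi :: "real \<Rightarrow> real \<Rightarrow> real measure \<Rightarrow> real \<Rightarrow> ennreal" where
  "Phi a b n lam =
     (\<integral>\<^sup>+ u. indicator {0..lam} u *
        inverse (ennreal (a * u + b) + (\<integral>\<^sup>+ y. ennreal (1 - exp (- u * y)) \<partial>ntilde n)) \<partial>lborel)"

definition F0 :: "(real \<Rightarrow> real) set" where
  "F0 = {f. \<exists>S c. finite S \<and> S \<subseteq> {0..} \<and> f = (\<lambda>x. \<Sum>l\<in>S. c l * exp (- l * x))}"

text \<open>Generator L_delta of the CBCI-process with quadruplet (a,b,n,delta).\<close>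
definition gen :: "real \<Rightarrow> real \<Rightarrow> real measure \<Rightarrow> real \<Rightarrow> (real \<Rightarrow> real) \<Rightarrow> real \<Rightarrow> real" where
  "gen a b n \<delta> f x =
     a * x * deriv (deriv f) x - b * x * deriv f x
     + x * (\<integral> y. f (x + y) - f x - y * deriv f x \<partial>n)
     + \<delta> * deriv f x"

definition dirichlet :: "real \<Rightarrow> real \<Rightarrow> real measure \<Rightarrow> real \<Rightarrow> real measure
    \<Rightarrow> (real \<Rightarrow> real) \<Rightarrow> (real \<Rightarrow> real) \<Rightarrow> real" where
  "dirichlet a b n \<delta> \<nu> f g = (\<integral> x. (- gen a b n \<delta> f x) * g x \<partial>\<nu>)"

end

theory Submission
  imports Defs
begin


lemma exp_neg_le: fixes t :: real assumes "0 \<le> t" shows "exp (-t) \<le> 1 - t + t\<^sup>2"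
proof (cases "t \<ge> 1")
  case True
  have "exp (-t) \<le> 1" using assms by simp
  also have "1 \<le> 1 - t + t\<^sup>2" using True by (simp add: power2_eq_square)
  finally show ?thesis .
next
  case False
  have e: "1 + t \<le> exp t" by (rule exp_ge_add_one_self)
  have "exp (-t) = 1 / exp t" by (simp add: exp_minus field_simps)
  also have "\<dots> \<le> 1 / (1 + t)" using e assms by (intro divide_left_mono) auto
  also have "\<dots> \<le> 1 - t + t\<^sup>2"
  proof -
    have "1 \<le> (1 + t) * (1 - t + t\<^sup>2)" using assms by (simp add: power2_eq_square algebra_simps)
    then show ?thesis using assms by (simp add: field_simps)
  qed
  finally show ?thesis .
qed

lemma k_nonneg: fixes t :: real shows "0 \<le> exp (-t) - 1 + t"
  using exp_ge_add_one_self[of "-t"] by simp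

lemma k_bound: fixes y l :: real assumes "0 < y" "0 \<le> l"
  shows "exp (-(l*y)) - 1 + l*y \<le> (l\<^sup>2 + l) * min (y\<^sup>2) y"
proof (cases "y \<le> 1")
  case True
  have m: "min (y\<^sup>2) y = y\<^sup>2" using True assms by (simp add: power2_eq_square mult_left_le)
  have "exp (-(l*y)) - 1 + l*y \<le> (l*y)\<^sup>2" using exp_neg_le[of "l*y"] assms by simp
  also have "\<dots> \<le> (l\<^sup>2 + l) * y\<^sup>2" using assms by (simp add: power_mult_distrib algebra_simps)
  finally show ?thesis using m by simp
next
  case False
  have m: "min (y\<^sup>2) y = y" using False assms by (simp add: power2_eq_square)
  have "exp (-(l*y)) \<le> 1" using assms by simp
  then have "exp (-(l*y)) - 1 + l*y \<le> l*y" by simp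
  also have "\<dots> \<le> (l\<^sup>2 + l) * y" using assms by (simp add: algebra_simps)
  finally show ?thesis using m by simp
qed

locale cbci =
  fixes a b :: real and n :: "real measure"
  assumes a: "a \<ge> 0" and b: "b \<ge> 0"
    and n_sets[measurable_cong]: "sets n = sets borel" and n_supp: "emeasure n {..0} = 0"
    and n_int: "(\<integral>\<^sup>+ y. ennreal (min (y\<^sup>2) y) \<partial>n) < \<infinity>"
begin

lemma space_n[simp]: "space n = UNIV"
  using sets_eq_imp_space_eq[OF n_sets] by simp

lemma AE_n_pos: "AE y in n. 0 < y"
proof (rule AE_I'[of "{..0}"])
  show "{..0} \<in> null_sets n" using n_supp by (auto simp: null_sets_def)
qed auto

lemma int_min: "integrable n (\<lambda>y. min (y\<^sup>2) y)"
proof (rule integrableI_nonneg)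
  show "AE y in n. 0 \<le> min (y\<^sup>2) y" using AE_n_pos by eventually_elim simp
qed (use n_int in auto)

definition K :: "real \<Rightarrow> real" where
  "K l = (\<integral> y. exp (-(l*y)) - 1 + l*y \<partial>n)"

lemma int_k: assumes "0 \<le> l" shows "integrable n (\<lambda>y. exp (-(l*y)) - 1 + l*y)"
proof (rule Bochner_Integration.integrable_bound)
  show "integrable n (\<lambda>y. (l\<^sup>2 + l) * min (y\<^sup>2) y)" by (intro integrable_mult_right int_min)
  show "AE y in n. norm (exp (-(l*y)) - 1 + l*y) \<le> norm ((l\<^sup>2 + l) * min (y\<^sup>2) y)"
    using AE_n_pos
  proof eventually_elim
    case (elim y)
    have "0 \<le> exp (-(l*y)) - 1 + l*y" using k_nonneg[of "l*y"] by simp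
    moreover have "exp (-(l*y)) - 1 + l*y \<le> (l\<^sup>2 + l) * min (y\<^sup>2) y" using k_bound elim assms by blast
    ultimately show ?case by simp
  qed
qed simp

lemma K_nonneg: "0 \<le> K l"
  unfolding K_def using k_nonneg by (intro integral_nonneg_AE) (auto intro!: AE_I2 simp: k_nonneg[of "l*_", simplified])

lemma K0[simp]: "K 0 = 0" by (simp add: K_def)

lemma sigma_n: "sigma_finite_measure n"
proof (rule sigma_finite_measure.intro, intro exI conjI)
  let ?A = "insert {..0} (range (\<lambda>k::nat. {1 / real (Suc k)..}))"
  show "countable ?A" by simp
  show "?A \<subseteq> sets n" by auto
  show "\<Union> ?A = space n"
  proof -
    have "y \<in> \<Union> ?A" for y :: real
    proof (cases "y \<le> 0")
      case True then show ?thesis by auto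
    next
      case False
      then obtain k where "inverse (real (Suc k)) < y" using reals_Archimedean by (meson not_le)
      then have "y \<in> {1 / real (Suc k)..}" by (simp add: divide_inverse)
      then show ?thesis by blast
    qed
    then show ?thesis by auto
  qed
  show "\<forall>A\<in>?A. emeasure n A \<noteq> \<infinity>"
  proof
    fix A assume "A \<in> ?A"
    then show "emeasure n A \<noteq> \<infinity>"
    proof
      assume "A = {..0}" then show ?thesis using n_supp by simp
    next
      assume "A \<in> range (\<lambda>k::nat. {1 / real (Suc k)..})"
      then obtain k where A: "A = {1 / real (Suc k)..}" by auto
      define c where "c = (1 / real (Suc k))\<^sup>2"
      have c: "0 < c" by (simp add: c_def)
      have le: "c \<le> min (y\<^sup>2) y" if "y \<in> A" for y
      proof -
        have y1: "1 / real (Suc k) \<le> y" using that A by auto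
        have p: "0 < 1 / real (Suc k)" by simp
        have "c \<le> y\<^sup>2" unfolding c_def using y1 p by (intro power_mono) auto
        moreover have "c \<le> y"
        proof -
          have h1: "1 / real (Suc k) \<le> 1" by simp
          have "(1 / real (Suc k))\<^sup>2 \<le> 1 / real (Suc k)"
            unfolding power2_eq_square using h1 p by (intro mult_left_le_one_le) auto
          then show ?thesis using y1 c_def by linarith
        qed
        ultimately show ?thesis by simp
      qed
      have "ennreal c * emeasure n A = (\<integral>\<^sup>+ y. ennreal c * indicator A y \<partial>n)"
        using A by (subst nn_integral_cmult_indicator) auto
      also have "\<dots> \<le> (\<integral>\<^sup>+ y. ennreal (min (y\<^sup>2) y) \<partial>n)"
        using le by (intro nn_integral_mono) (auto simp: indicator_def intro!: ennreal_leI)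
      also have "\<dots> < \<infinity>" by (rule n_int)
      finally have "ennreal c * emeasure n A < \<infinity>" .
      then show ?thesis using c by (auto simp: ennreal_mult_less_top)
    qed
  qed
qed


definition rho :: "real \<Rightarrow> ennreal" where
  "rho y = indicator {0<..} y * emeasure n {y..}"

lemma ntilde_eq: "ntilde n = density lborel rho"
  by (simp add: ntilde_def rho_def[abs_def])

lemma sets_nt[measurable_cong]: "sets (ntilde n) = sets borel"
  by (simp add: ntilde_def)

lemma space_nt[simp]: "space (ntilde n) = UNIV"
  using sets_eq_imp_space_eq[OF sets_nt] by simp

lemma rho_meas[measurable]: "rho \<in> borel_measurable borel"
proof -
  interpret N: sigma_finite_measure n by (rule sigma_n)
  have m: "(\<lambda>p::real \<times> real. indicator {p. fst p \<le> snd p} p :: ennreal) \<in> borel_measurable (borel \<Otimes>\<^sub>M n)"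
    by measurable
  have "case_prod (\<lambda>y x. indicator {y..} x :: ennreal) = (\<lambda>p::real \<times> real. indicator {p. fst p \<le> snd p} p)"
    by (auto simp: indicator_def fun_eq_iff)
  with m have "(\<lambda>y. \<integral>\<^sup>+ x. indicator {y..} x \<partial>n) \<in> borel_measurable borel"
    by (intro N.borel_measurable_nn_integral) simp
  then have "(\<lambda>y. emeasure n {y..}) \<in> borel_measurable borel"
    by (subst (asm) nn_integral_indicator) auto
  then show ?thesis unfolding rho_def[abs_def] by measurable
qed

lemma AE_nt_pos: "AE y in ntilde n. 0 < y"
proof -
  have "AE y in lborel. 0 < rho y \<longrightarrow> 0 < y"
  proof (intro AE_I2 impI)
    fix y assume "0 < rho y"
    then show "0 < y" by (cases "0 < y") (auto simp: rho_def)
  qed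
  moreover have "rho \<in> borel_measurable lborel" using rho_meas by simp
  ultimately show ?thesis unfolding ntilde_eq by (simp add: AE_density)
qed

lemma J_nn:
  assumes l: "0 < l"
  shows "(\<integral>\<^sup>+ y. ennreal (1 - exp (-(l*y))) \<partial>ntilde n) = ennreal (K l / l)"
proof -
  interpret N: sigma_finite_measure n by (rule sigma_n)
  interpret P: pair_sigma_finite lborel n
    by (intro pair_sigma_finite.intro lborel.sigma_finite_measure_axioms sigma_n)
  define w where "w z y = (if 0 < z \<and> z \<le> y then 1 - exp (-(l*z)) else 0)" for z y :: real
  have wm: "case_prod (\<lambda>z y. ennreal (w z y)) \<in> borel_measurable (lborel \<Otimes>\<^sub>M n)"
    unfolding w_def[abs_def] by measurable
  have "(\<integral>\<^sup>+ y. ennreal (1 - exp (-(l*y))) \<partial>ntilde n) = (\<integral>\<^sup>+ z. rho z * ennreal (1 - exp (-(l*z))) \<partial>lborel)"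
    unfolding ntilde_eq by (rule nn_integral_density) auto
  also have "\<dots> = (\<integral>\<^sup>+ z. (\<integral>\<^sup>+ y. ennreal (w z y) \<partial>n) \<partial>lborel)"
  proof (rule nn_integral_cong)
    fix z :: real
    show "rho z * ennreal (1 - exp (-(l*z))) = (\<integral>\<^sup>+ y. ennreal (w z y) \<partial>n)"
    proof (cases "0 < z")
      case True
      have "(\<integral>\<^sup>+ y. ennreal (w z y) \<partial>n) = (\<integral>\<^sup>+ y. ennreal (1 - exp (-(l*z))) * indicator {z..} y \<partial>n)"
        using True by (intro nn_integral_cong) (auto simp: w_def indicator_def)
      also have "\<dots> = ennreal (1 - exp (-(l*z))) * emeasure n {z..}"
        by (rule nn_integral_cmult_indicator) simp
      finally show ?thesis using True by (simp add: rho_def mult.commute)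
    next
      case False
      then show ?thesis by (simp add: rho_def w_def)
    qed
  qed
  also have "\<dots> = (\<integral>\<^sup>+ y. (\<integral>\<^sup>+ z. ennreal (w z y) \<partial>lborel) \<partial>n)"
    by (rule P.Fubini'[symmetric]) (rule wm)
  also have "\<dots> = (\<integral>\<^sup>+ y. ennreal ((exp (-(l*y)) - 1 + l*y) / l) \<partial>n)"
    using AE_n_pos
  proof (intro nn_integral_cong_AE, eventually_elim)
    case (elim y)
    have "(\<integral>\<^sup>+ z. ennreal (w z y) \<partial>lborel) = (\<integral>\<^sup>+ z. ennreal (indicator {0..y} z * (1 - exp (-(l*z)))) \<partial>lborel)"
      by (intro nn_integral_cong) (auto simp: w_def indicator_def)
    also have "\<dots> = ennreal ((y + exp (-(l*y)) / l) - (0 + exp (-(l*0)) / l))"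
    proof (rule nn_integral_has_integral_lebesgue)
      show "0 \<le> 1 - exp (-(l*z))" if "z \<in> {0..y}" for z using that l by auto
      show "((\<lambda>z. 1 - exp (-(l*z))) has_integral (y + exp (-(l*y)) / l) - (0 + exp (-(l*0)) / l)) {0..y}"
      proof (rule fundamental_theorem_of_calculus)
        show "0 \<le> y" using elim by simp
        fix z :: real
        have "((\<lambda>z. z + exp (-(l*z)) / l) has_real_derivative (1 - exp (-(l*z)))) (at z within {0..y})"
          using l by (auto intro!: derivative_eq_intros)
        then show "((\<lambda>z. z + exp (-(l*z)) / l) has_vector_derivative (1 - exp (-(l*z)))) (at z within {0..y})"
          by (simp add: has_real_derivative_iff_has_vector_derivative)
      qed
    qed
    also have "(y + exp (-(l*y)) / l) - (0 + exp (-(l*0)) / l) = (exp (-(l*y)) - 1 + l*y) / l"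
      using l by (simp add: field_simps)
    finally show ?case .
  qed
  also have "\<dots> = ennreal (\<integral> y. (exp (-(l*y)) - 1 + l*y) / l \<partial>n)"
  proof (rule nn_integral_eq_integral)
    show "integrable n (\<lambda>y. (exp (-(l*y)) - 1 + l*y) / l)"
      using int_k[of l] l by (intro integrable_divide_zero) auto
    show "AE y in n. 0 \<le> (exp (-(l*y)) - 1 + l*y) / l"
      using l k_nonneg[of "l*_"] by (intro AE_I2) simp
  qed
  also have "\<dots> = ennreal (K l / l)" by (simp add: K_def)
  finally show ?thesis .
qed


definition J :: "real \<Rightarrow> real" where "J u = K u / u"

lemma J0[simp]: "J 0 = 0" by (simp add: J_def)

lemma J_nonneg: "0 \<le> u \<Longrightarrow> 0 \<le> J u"
  by (simp add: J_def K_nonneg)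

lemma int_J: assumes "0 \<le> u" shows "integrable (ntilde n) (\<lambda>y. 1 - exp (-(u*y)))"
proof (cases "u = 0")
  case True then show ?thesis by simp
next
  case False
  with assms have u: "0 < u" by simp
  show ?thesis
  proof (rule integrableI_nonneg)
    show "AE y in ntilde n. 0 \<le> 1 - exp (-(u*y))"
      using AE_nt_pos by eventually_elim (use u in simp)
    show "(\<integral>\<^sup>+ y. ennreal (1 - exp (-(u*y))) \<partial>ntilde n) < \<infinity>"
      using J_nn[OF u] by simp
  qed simp
qed

lemma integral_J: assumes "0 \<le> u" shows "(\<integral> y. 1 - exp (-(u*y)) \<partial>ntilde n) = J u"
proof (cases "u = 0")
  case True then show ?thesis by simp
next
  case False
  with assms have u: "0 < u" by simp
  have ae: "AE y in ntilde n. 0 \<le> 1 - exp (-(u*y))"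
    using AE_nt_pos by eventually_elim (use u in simp)
  have "ennreal (\<integral> y. 1 - exp (-(u*y)) \<partial>ntilde n) = ennreal (K u / u)"
    using nn_integral_eq_integral[OF int_J[OF assms] ae] J_nn[OF u] by simp
  moreover have "0 \<le> (\<integral> y. 1 - exp (-(u*y)) \<partial>ntilde n)" using ae by (rule integral_nonneg_AE)
  moreover have "0 \<le> K u / u" using u K_nonneg by simp
  ultimately show ?thesis by (simp add: J_def)
qed

lemma J_mono: assumes "0 \<le> u" "u \<le> v" shows "J u \<le> J v"
proof -
  have "(\<integral> y. 1 - exp (-(u*y)) \<partial>ntilde n) \<le> (\<integral> y. 1 - exp (-(v * y)) \<partial>ntilde n)"
  proof (rule integral_mono_AE)
    show "AE y in ntilde n. 1 - exp (-(u*y)) \<le> 1 - exp (-(v * y))"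
      using AE_nt_pos by eventually_elim (use assms in \<open>auto intro: mult_right_mono\<close>)
  qed (use int_J[of u] int_J[of v] assms in auto)
  then show ?thesis using assms integral_J[of u] integral_J[of v] by simp
qed

definition D :: "real \<Rightarrow> real" where "D u = a*u + b + J u"

lemma D_nonneg: "0 \<le> u \<Longrightarrow> 0 \<le> D u"
  using a b J_nonneg[of u] by (simp add: D_def)

lemma D_mono: "0 \<le> u \<Longrightarrow> u \<le> v \<Longrightarrow> D u \<le> D v"
  using a J_mono[of u v] by (simp add: D_def mult_left_mono add_mono)

lemma psi_eq: "l * D l = a*l\<^sup>2 + b*l + K l"
  by (cases "l = 0") (auto simp: D_def J_def power2_eq_square algebra_simps)

lemma den_eq: assumes "0 \<le> u"
  shows "ennreal (a*u + b) + (\<integral>\<^sup>+ y. ennreal (1 - exp (- u * y)) \<partial>ntilde n) = ennreal (D u)"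
proof -
  have "(\<integral>\<^sup>+ y. ennreal (1 - exp (- u * y)) \<partial>ntilde n) = ennreal (J u)"
  proof (cases "u = 0")
    case True then show ?thesis by simp
  next
    case False then have "0 < u" using assms by simp
    from J_nn[OF this] show ?thesis by (simp add: J_def)
  qed
  then show ?thesis using a b assms J_nonneg[OF assms]
    by (simp add: D_def ennreal_plus[symmetric] del: ennreal_plus)
qed

lemma K_convex: "convex_on {0<..} K"
proof (rule convex_onI)
  show "convex {0::real<..}" by (rule convex_real_interval)
  fix t u v :: real assume t: "0 < t" "t < 1" and uv: "u \<in> {0<..}" "v \<in> {0<..}"
  have pw: "exp (-(((1-t)*u + t * v)*y)) - 1 + ((1-t)*u + t * v)*y \<le>
      (1-t) * (exp (-(u*y)) - 1 + u*y) + t * (exp (-(v * y)) - 1 + v * y)" for y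
  proof -
    have "exp (1 * ((1-t) *\<^sub>R (-(u*y)) + t *\<^sub>R (-(v * y)))) \<le> (1-t) * exp (1 * (-(u*y))) + t * exp (1 * (-(v * y)))"
      using t by (intro convex_onD[OF convex_on_exp]) auto
    then show ?thesis by (simp add: algebra_simps)
  qed
  have "K ((1-t)*u + t * v) \<le> (\<integral> y. (1-t) * (exp (-(u*y)) - 1 + u*y) + t * (exp (-(v * y)) - 1 + v * y) \<partial>n)"
    unfolding K_def using uv t pw
    by (intro integral_mono int_k Bochner_Integration.integrable_add integrable_mult_right) auto
  also have "\<dots> = (1-t) * K u + t * K v"
    unfolding K_def using uv
    by (subst Bochner_Integration.integral_add) (auto intro!: integrable_mult_right int_k)
  finally show "K ((1 - t) *\<^sub>R u + t *\<^sub>R v) \<le> (1 - t) * K u + t * K v" by simp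
qed

lemma D_cont: "continuous_on {0<..} D"
proof -
  have "continuous_on {0<..} K" by (rule convex_on_continuous[OF _ K_convex]) simp
  then show ?thesis unfolding D_def[abs_def] J_def
    by (intro continuous_intros) auto
qed


definition Dm :: "real \<Rightarrow> real" where "Dm u = D (max u 0)"

lemma Dm_meas[measurable]: "Dm \<in> borel_measurable borel"
proof (rule borel_measurable_mono)
  show "mono Dm" unfolding mono_def Dm_def by (auto intro!: D_mono)
qed

lemma Phi_eq: "Phi a b n t = (\<integral>\<^sup>+ u. indicator {0..t} u * inverse (ennreal (Dm u)) \<partial>lborel)"
  unfolding Phi_def
proof (intro nn_integral_cong)
  fix u :: real
  show "indicator {0..t} u * inverse (ennreal (a * u + b) + (\<integral>\<^sup>+ y. ennreal (1 - exp (- u * y)) \<partial>ntilde n)) =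
        indicator {0..t} u * inverse (ennreal (Dm u))"
  proof (cases "u \<in> {0..t}")
    case True
    then have "max u 0 = u" by simp
    then have "Dm u = D u" by (simp add: Dm_def)
    then show ?thesis using den_eq[of u] True by simp
  qed simp
qed

end

locale cbci2 = cbci +
  assumes Phi1: "Phi a b n 1 < \<infinity>"
begin

lemma D_pos: assumes u: "0 < u" shows "0 < D u"
proof (rule ccontr)
  assume "\<not> 0 < D u"
  then have Du: "D u = 0" using D_nonneg[of u] u by simp
  define e where "e = min u 1"
  have e: "0 < e" "e \<le> 1" "e \<le> u" using u by (auto simp: e_def)
  have "(\<integral>\<^sup>+ v. \<top> * indicator {0..e} v \<partial>lborel) \<le> (\<integral>\<^sup>+ v. indicator {0..1} v * inverse (ennreal (Dm v)) \<partial>lborel)"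
  proof (intro nn_integral_mono)
    fix v :: real
    show "\<top> * indicator {0..e} v \<le> indicator {0..1} v * inverse (ennreal (Dm v))"
    proof (cases "v \<in> {0..e}")
      case True
      then have "0 \<le> D v" "D v \<le> D u" using e by (auto intro!: D_nonneg D_mono)
      then have "Dm v = 0" using True Du by (auto simp: Dm_def max_def)
      then show ?thesis using True e by auto
    qed auto
  qed
  also have "\<dots> = Phi a b n 1" by (simp add: Phi_eq)
  finally have "(\<integral>\<^sup>+ v. \<top> * indicator {0..e} v \<partial>lborel) < \<infinity>" using Phi1 by simp
  moreover have "(\<integral>\<^sup>+ v. \<top> * indicator {0..e} v \<partial>lborel) = \<top>"
    using e by (subst nn_integral_cmult_indicator) (auto simp: ennreal_top_mult)
  ultimately show False by simp
qed

definition F :: "real \<Rightarrow> real" where "F t = enn2real (Phi a b n t)"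

lemma F_deriv: assumes t: "0 < t" shows "(F has_real_derivative 1 / D t) (at t)"
proof -
  define c where "c = min (t/2) (1/2)"
  have c: "0 < c" "c < t" "c \<le> 1" using t by (auto simp: c_def)
  define h where "h u = 1 / D u" for u
  define A where "A = (\<integral>\<^sup>+ u. indicator {0..<c} u * inverse (ennreal (Dm u)) \<partial>lborel)"
  have "A \<le> Phi a b n 1" unfolding A_def Phi_eq using c
    by (intro nn_integral_mono) (auto simp: indicator_def)
  then have A: "A < \<infinity>" using Phi1 by simp
  have hc: "continuous_on {c..x} h" for x
  proof -
    have "continuous_on {c..x} D" using D_cont by (rule continuous_on_subset) (use c in auto)
    then show ?thesis unfolding h_def[abs_def] using D_pos c
      by (intro continuous_intros) (auto dest!: D_pos[of _] simp: less_le)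
  qed
  have hnn: "0 \<le> h u" if "c \<le> u" for u using D_pos[of u] that c by (simp add: h_def)
  have eq: "F x = enn2real A + integral {c..x} h" if x: "c \<le> x" for x
  proof -
    have "Phi a b n x = (\<integral>\<^sup>+ u. indicator {0..<c} u * inverse (ennreal (Dm u)) + indicator {c..x} u * inverse (ennreal (Dm u)) \<partial>lborel)"
      unfolding Phi_eq using x c
      by (intro nn_integral_cong) (auto simp: indicator_def)
    also have "\<dots> = A + (\<integral>\<^sup>+ u. indicator {c..x} u * inverse (ennreal (Dm u)) \<partial>lborel)"
      unfolding A_def by (rule nn_integral_add) auto
    also have "(\<integral>\<^sup>+ u. indicator {c..x} u * inverse (ennreal (Dm u)) \<partial>lborel) = (\<integral>\<^sup>+ u. ennreal (indicator {c..x} u * h u) \<partial>lborel)"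
    proof (intro nn_integral_cong)
      fix u :: real
      show "indicator {c..x} u * inverse (ennreal (Dm u)) = ennreal (indicator {c..x} u * h u)"
      proof (cases "u \<in> {c..x}")
        case True
        then have "0 < D u" using c by (intro D_pos) auto
        then show ?thesis using True c by (simp add: Dm_def h_def inverse_ennreal max_def divide_inverse)
      qed simp
    qed
    also have "\<dots> = ennreal (integral {c..x} h)"
      using hnn integrable_continuous_interval[OF hc]
      by (intro nn_integral_has_integral_lebesgue) (auto intro: integrable_integral)
    finally have "Phi a b n x = A + ennreal (integral {c..x} h)" .
    moreover have "0 \<le> integral {c..x} h"
      using hnn integrable_continuous_interval[OF hc] by (intro integral_nonneg) auto
    ultimately show ?thesis using A by (simp add: F_def enn2real_plus)
  qed
  have "((\<lambda>x. integral {c..x} h) has_real_derivative h t) (at t within {c..t+1})"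
    using hc c by (intro integral_has_real_derivative) auto
  moreover have "at t within {c..t+1} = at t"
    using c by (intro at_within_interior) auto
  ultimately have "((\<lambda>x. enn2real A + integral {c..x} h) has_real_derivative h t) (at t)"
    by (auto intro!: derivative_eq_intros)
  then have "(F has_real_derivative h t) (at t)"
    by (rule has_field_derivative_transform_within_open[where S = "{c<..}"]) (use c eq in auto)
  then show ?thesis by (simp add: h_def)
qed


end

lemma taylor_bound: fixes y :: real shows "\<bar>exp y - 1 - y\<bar> \<le> y\<^sup>2 * exp \<bar>y\<bar>"
proof -
  have nn: "0 \<le> exp y - 1 - y" using exp_ge_add_one_self[of y] by linarith
  have "exp y - 1 - y \<le> y\<^sup>2 * exp \<bar>y\<bar>"
  proof (cases "0 \<le> y")
    case True
    have e1: "1 - y \<le> exp (-y)" using exp_ge_add_one_self[of "-y"] by simp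
    have e2: "exp y - 1 \<le> y * exp y"
    proof -
      have "exp y * (1 - y) \<le> exp y * exp (-y)" using e1 by (intro mult_left_mono) auto
      then show ?thesis by (simp add: exp_minus algebra_simps)
    qed
    have "exp y - 1 - y \<le> y * (exp y - 1)" using e2 by (simp add: algebra_simps)
    also have "\<dots> \<le> y * (y * exp y)" using True e2 by (intro mult_left_mono) auto
    finally show ?thesis using True by (simp add: power2_eq_square)
  next
    case False
    have "exp y - 1 - y \<le> y\<^sup>2" using exp_neg_le[of "-y"] False by simp
    also have "\<dots> \<le> y\<^sup>2 * exp \<bar>y\<bar>"
    proof -
      have "1 \<le> exp \<bar>y\<bar>" by simp
      then show ?thesis using mult_left_mono[of 1 "exp \<bar>y\<bar>" "y\<^sup>2"] by simp
    qed
    finally show ?thesis .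
  qed
  moreover have "\<bar>exp y - 1 - y\<bar> = exp y - 1 - y" using nn by (rule abs_of_nonneg)
  ultimately show ?thesis by linarith
qed

lemma sq_exp_bound: fixes x s :: real assumes "0 \<le> x" "0 < s"
  shows "x\<^sup>2 * exp (-(s*x/2)) \<le> 8 / s\<^sup>2"
proof -
  have "1 + s*x/2 + (s*x/2)\<^sup>2 / 2 \<le> exp (s*x/2)" using assms by (intro exp_lower_Taylor_quadratic) simp
  moreover have "(s*x/2)\<^sup>2 / 2 = s\<^sup>2 * x\<^sup>2 / 8" by (simp add: power2_eq_square)
  moreover have "0 \<le> 1 + s*x/2" using assms by simp
  ultimately have "s\<^sup>2 * x\<^sup>2 / 8 \<le> exp (s*x/2)" by linarith
  then have "s\<^sup>2 * x\<^sup>2 \<le> 8 * exp (s*x/2)" by simp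
  then have "x\<^sup>2 \<le> 8 * exp (s*x/2) / s\<^sup>2" using assms by (simp add: field_simps)
  then have "x\<^sup>2 * exp (-(s*x/2)) \<le> 8 * exp (s*x/2) / s\<^sup>2 * exp (-(s*x/2))"
    by (intro mult_right_mono) auto
  also have "\<dots> = 8 / s\<^sup>2" by (simp add: exp_minus field_simps)
  finally show ?thesis .
qed

lemma diff_bound: fixes x s h :: real assumes x: "0 \<le> x" and s: "0 < s" and h: "\<bar>h\<bar> \<le> s/2"
  shows "\<bar>exp (-((s+h)*x)) - exp (-(s*x)) + h * (x * exp (-(s*x)))\<bar> \<le> 8 / s\<^sup>2 * h\<^sup>2"
proof -
  have eq: "exp (-((s+h)*x)) - exp (-(s*x)) + h * (x * exp (-(s*x))) = exp (-(s*x)) * (exp (-(h*x)) - 1 - (-(h*x)))"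
    by (simp add: algebra_simps exp_add[symmetric])
  have B: "\<bar>exp (-(h*x)) - 1 - (-(h*x))\<bar> \<le> (h*x)\<^sup>2 * exp \<bar>h*x\<bar>"
    using taylor_bound[of "-(h*x)"] unfolding abs_minus_cancel power2_minus .
  have A: "\<bar>exp (-((s+h)*x)) - exp (-(s*x)) + h * (x * exp (-(s*x)))\<bar> = exp (-(s*x)) * \<bar>exp (-(h*x)) - 1 - (-(h*x))\<bar>"
    unfolding eq abs_mult by simp
  have "\<bar>exp (-((s+h)*x)) - exp (-(s*x)) + h * (x * exp (-(s*x)))\<bar> \<le> exp (-(s*x)) * ((h*x)\<^sup>2 * exp \<bar>h*x\<bar>)"
    unfolding A by (intro mult_left_mono B) auto
  also have "\<dots> = h\<^sup>2 * (x\<^sup>2 * (exp (-(s*x)) * exp \<bar>h*x\<bar>))" by (simp add: power_mult_distrib)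
  also have "\<dots> \<le> h\<^sup>2 * (x\<^sup>2 * exp (-(s*x/2)))"
  proof -
    have "\<bar>h\<bar> * x \<le> (s/2) * x" using h x by (intro mult_right_mono) auto
    then have "\<bar>h*x\<bar> \<le> s*x/2" using x by (simp add: abs_mult)
    then have "exp (-(s*x)) * exp \<bar>h*x\<bar> \<le> exp (-(s*x/2))" by (simp add: exp_add[symmetric])
    then show ?thesis by (intro mult_left_mono) auto
  qed
  also have "\<dots> \<le> h\<^sup>2 * (8 / s\<^sup>2)" using sq_exp_bound[OF x s] by (intro mult_left_mono) auto
  finally show ?thesis by (simp add: mult.commute)
qed

locale cbci3 = cbci2 +
  fixes \<delta> :: real and \<nu> :: "real measure"
  assumes delta: "\<delta> > 0"
    and nu_prob: "prob_space \<nu>" and nu_sets[measurable_cong]: "sets \<nu> = sets borel"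
    and nu_supp: "emeasure \<nu> {..<0} = 0"
    and nu_laplace: "\<And>lam. lam \<ge> 0 \<Longrightarrow>
        (\<integral> x. exp (- lam * x) \<partial>\<nu>) = exp (- \<delta> * enn2real (Phi a b n lam))"
begin

interpretation NU: prob_space \<nu> by (rule nu_prob)

lemma space_nu[simp]: "space \<nu> = UNIV"
  using sets_eq_imp_space_eq[OF nu_sets] by simp

lemma AE_nu_nonneg: "AE x in \<nu>. 0 \<le> x"
proof (rule AE_I'[of "{..<0}"])
  show "{..<0} \<in> null_sets \<nu>" using nu_supp by (auto simp: null_sets_def)
qed auto

lemma int_e: assumes "0 \<le> s" shows "integrable \<nu> (\<lambda>x. exp (-(s*x)))"
proof (rule NU.integrable_const_bound[where B=1])
  show "AE x in \<nu>. norm (exp (-(s*x))) \<le> 1"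
    using AE_nu_nonneg by eventually_elim (use assms in simp)
qed simp

lemma xe_bound: fixes x s :: real assumes "0 \<le> x" "0 < s" shows "x * exp (-(s*x)) \<le> 1 / s"
proof -
  have "1 + s*x \<le> exp (s*x)" using exp_ge_add_one_self[of "s*x"] by linarith
  then have "s * x \<le> exp (s*x)" by linarith
  then have "x \<le> exp (s*x) / s" using assms by (simp add: field_simps)
  then have "x * exp (-(s*x)) \<le> exp (s*x) / s * exp (-(s*x))" by (intro mult_right_mono) auto
  also have "\<dots> = 1 / s" by (simp add: exp_minus field_simps)
  finally show ?thesis .
qed

lemma int_xe: assumes "0 < s" shows "integrable \<nu> (\<lambda>x. x * exp (-(s*x)))"
proof (rule NU.integrable_const_bound[where B="1/s"])
  show "AE x in \<nu>. norm (x * exp (-(s*x))) \<le> 1/s"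
    using AE_nu_nonneg by eventually_elim (use assms xe_bound in simp)
qed simp

definition L :: "real \<Rightarrow> real" where "L s = (\<integral> x. exp (-(s*x)) \<partial>\<nu>)"
definition M :: "real \<Rightarrow> real" where "M s = (\<integral> x. x * exp (-(s*x)) \<partial>\<nu>)"

lemma L_eq: "0 \<le> s \<Longrightarrow> L s = exp (- \<delta> * F s)"
  using nu_laplace[of s] by (simp add: L_def F_def)

lemma L_deriv: assumes s: "0 < s" shows "(L has_real_derivative - M s) (at s)"
proof -
  define Q where "Q y = (L y - L s) / (y - s) + M s" for y
  have bnd: "norm (Q y) \<le> 8 / s\<^sup>2 * \<bar>y - s\<bar>" if y: "y \<noteq> s" "\<bar>y - s\<bar> < s/2" for y
  proof -
    define h where "h = y - s"
    have h: "h \<noteq> 0" "\<bar>h\<bar> \<le> s/2" using y by (auto simp: h_def)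
    have sh: "0 \<le> s + h" using h s by linarith
    have "L y - L s + h * M s = (\<integral> x. exp (-((s+h)*x)) - exp (-(s*x)) + h * (x * exp (-(s*x))) \<partial>\<nu>)"
      unfolding L_def M_def h_def using int_e[OF sh] int_e[of s] int_xe[OF s] s
      by (simp add: Bochner_Integration.integral_add Bochner_Integration.integral_diff
          integrable_mult_right Bochner_Integration.integrable_diff h_def)
    also have "\<bar>\<dots>\<bar> \<le> (\<integral> x. 8 / s\<^sup>2 * h\<^sup>2 \<partial>\<nu>)"
    proof -
      have "\<bar>\<integral> x. exp (-((s+h)*x)) - exp (-(s*x)) + h * (x * exp (-(s*x))) \<partial>\<nu>\<bar> \<le>
            (\<integral> x. \<bar>exp (-((s+h)*x)) - exp (-(s*x)) + h * (x * exp (-(s*x)))\<bar> \<partial>\<nu>)"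
        by (rule integral_abs_bound)
      also have "\<dots> \<le> (\<integral> x. 8 / s\<^sup>2 * h\<^sup>2 \<partial>\<nu>)"
      proof (rule integral_mono_AE)
        show "integrable \<nu> (\<lambda>x. \<bar>exp (-((s+h)*x)) - exp (-(s*x)) + h * (x * exp (-(s*x)))\<bar>)"
          using int_e[OF sh] int_e[of s] int_xe[OF s] s
          by (intro integrable_abs Bochner_Integration.integrable_add Bochner_Integration.integrable_diff integrable_mult_right) auto
        show "AE x in \<nu>. \<bar>exp (-((s+h)*x)) - exp (-(s*x)) + h * (x * exp (-(s*x)))\<bar> \<le> 8 / s\<^sup>2 * h\<^sup>2"
          using AE_nu_nonneg by eventually_elim (use diff_bound s h in auto)
      qed simp
      finally show ?thesis .
    qed
    also have "\<dots> = 8 / s\<^sup>2 * h\<^sup>2" using NU.prob_space by simp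
    finally have "\<bar>L y - L s + h * M s\<bar> \<le> 8 / s\<^sup>2 * h\<^sup>2" .
    moreover have "Q y = (L y - L s + h * M s) / h" using h by (simp add: Q_def h_def field_simps)
    ultimately have "\<bar>Q y\<bar> = \<bar>L y - L s + h * M s\<bar> / \<bar>h\<bar>" and bd: "\<bar>L y - L s + h * M s\<bar> \<le> 8 / s\<^sup>2 * h\<^sup>2"
      by (simp_all add: abs_divide)
    then have "\<bar>Q y\<bar> \<le> 8 / s\<^sup>2 * h\<^sup>2 / \<bar>h\<bar>" by (simp only:) (rule divide_right_mono[OF bd], simp)
    also have "\<dots> = 8 / s\<^sup>2 * \<bar>h\<bar>" using h by (simp add: power2_eq_square field_simps)
    finally show ?thesis by (simp add: h_def)
  qed
  have "(Q \<longlongrightarrow> 0) (at s)"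
  proof (rule Lim_null_comparison)
    show "\<forall>\<^sub>F y in at s. norm (Q y) \<le> 8 / s\<^sup>2 * \<bar>y - s\<bar>"
      unfolding eventually_at
    proof (intro exI[of _ "s/2"] conjI ballI impI)
      fix y assume "y \<noteq> s \<and> dist y s < s/2"
      then show "norm (Q y) \<le> 8 / s\<^sup>2 * \<bar>y - s\<bar>" by (intro bnd) (auto simp: dist_real_def)
    qed (use s in auto)
    have "((\<lambda>y. 8 / s\<^sup>2 * \<bar>y - s\<bar>) \<longlongrightarrow> 8 / s\<^sup>2 * \<bar>s - s\<bar>) (at s)"
      by (intro tendsto_intros)
    then show "((\<lambda>y. 8 / s\<^sup>2 * \<bar>y - s\<bar>) \<longlongrightarrow> 0) (at s)" by simp
  qed
  then have "((\<lambda>y. Q y - M s) \<longlongrightarrow> 0 - M s) (at s)" by (intro tendsto_intros)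
  then show ?thesis unfolding has_field_derivative_iff by (simp add: Q_def)
qed

lemma key: assumes s: "0 < s" shows "\<delta> * L s = D s * M s"
proof -
  have "((\<lambda>u. - \<delta> * F u) has_real_derivative - \<delta> * (1 / D s)) (at s)"
    by (rule DERIV_cmult[OF F_deriv[OF s]])
  then have "((\<lambda>u. exp (- \<delta> * F u)) has_real_derivative exp (- \<delta> * F s) * (- \<delta> * (1 / D s))) (at s)"
    by (rule DERIV_chain2[OF DERIV_exp])
  then have "(L has_real_derivative exp (- \<delta> * F s) * (- \<delta> * (1 / D s))) (at s)"
    by (rule has_field_derivative_transform_within_open[where S="{0<..}"]) (use s L_eq in auto)
  then have "- M s = exp (- \<delta> * F s) * (- \<delta> * (1 / D s))"
    using L_deriv[OF s] by (rule DERIV_unique[rotated])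
  then have "- M s = - \<delta> * L s / D s" using L_eq[of s] s by simp
  then show ?thesis using D_pos[OF s] by (simp add: field_simps)
qed

end



lemma deriv_expsum:
  fixes c :: "real \<Rightarrow> real"
  assumes "finite S"
  shows "deriv (\<lambda>x. \<Sum>l\<in>S. c l * exp (- l * x)) = (\<lambda>x. \<Sum>l\<in>S. (c l * (- l)) * exp (- l * x))"
proof
  fix x :: real
  have "((\<lambda>x. \<Sum>l\<in>S. c l * exp (- l * x)) has_real_derivative (\<Sum>l\<in>S. (c l * (- l)) * exp (- l * x))) (at x)"
    by (rule DERIV_sum) (auto intro!: derivative_eq_intros)
  then show "deriv (\<lambda>x. \<Sum>l\<in>S. c l * exp (- l * x)) x = (\<Sum>l\<in>S. (c l * (- l)) * exp (- l * x))"
    by (rule DERIV_imp_deriv)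
qed


context cbci3
begin

definition psi :: "real \<Rightarrow> real" where "psi l = a*l\<^sup>2 + b*l + K l"

lemma psi0[simp]: "psi 0 = 0" by (simp add: psi_def)

lemma gen_expsum:
  assumes S: "finite S" "S \<subseteq> {0..}"
  shows "gen a b n \<delta> (\<lambda>x. \<Sum>l\<in>S. c l * exp (- l * x)) x = (\<Sum>l\<in>S. c l * exp (-(l*x)) * (x * psi l - \<delta> * l))"
proof -
  let ?f = "\<lambda>x. \<Sum>l\<in>S. c l * exp (- l * x)"
  have d1: "deriv ?f = (\<lambda>x. \<Sum>l\<in>S. (c l * (-l)) * exp (- l * x))" by (rule deriv_expsum[OF S(1)])
  have d2: "deriv (deriv ?f) = (\<lambda>x. \<Sum>l\<in>S. ((c l * (-l)) * (-l)) * exp (- l * x))"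
    unfolding d1 by (rule deriv_expsum[OF S(1)])
  have ex: "exp (- l * (x + y)) = exp (-(l*x)) * exp (-(l*y))" for l y :: real
    by (simp add: exp_add[symmetric] algebra_simps)
  have pw: "?f (x+y) - ?f x - y * deriv ?f x = (\<Sum>l\<in>S. c l * exp (-(l*x)) * (exp (-(l*y)) - 1 + l*y))" for y
    unfolding d1
    apply (simp only: sum_distrib_left sum_subtractf[symmetric] ex)
    apply (rule sum.cong[OF refl])
    apply (simp add: algebra_simps)
    done
  have int: "(\<integral> y. ?f (x+y) - ?f x - y * deriv ?f x \<partial>n) = (\<Sum>l\<in>S. c l * exp (-(l*x)) * K l)"
    unfolding pw K_def using S
    by (subst Bochner_Integration.integral_sum) (auto intro!: integrable_mult_right int_k)
  show ?thesis unfolding gen_def unfolding d2 unfolding int unfolding d1 psi_def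
    apply (simp only: sum_distrib_left sum_subtractf[symmetric] sum.distrib[symmetric])
    apply (rule sum.cong[OF refl])
    apply (simp add: algebra_simps power2_eq_square)
    done
qed


lemma t1: assumes "0 \<le> l" "0 \<le> m"
  shows "integrable \<nu> (\<lambda>x. exp (-((l+m)*x)) * (\<delta>*l - x*psi l)) \<and>
         (\<integral> x. exp (-((l+m)*x)) * (\<delta>*l - x*psi l) \<partial>\<nu>) = \<delta>*l*L (l+m) - psi l * M (l+m)"
proof (cases "l = 0")
  case True then show ?thesis by simp
next
  case False
  then have s: "0 < l + m" using assms by simp
  have eq: "(\<lambda>x. exp (-((l+m)*x)) * (\<delta>*l - x*psi l)) = (\<lambda>x. \<delta>*l * exp (-((l+m)*x)) - psi l * (x * exp (-((l+m)*x))))"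
    by (auto simp: algebra_simps)
  show ?thesis unfolding eq L_def M_def using int_e[of "l+m"] int_xe[OF s] s
    by (auto intro!: Bochner_Integration.integrable_diff integrable_mult_right
        simp: Bochner_Integration.integral_diff)
qed

lemma t2: assumes "0 \<le> l" "0 \<le> m"
  shows "integrable \<nu> (\<lambda>x. l*m * (x * exp (-((l+m)*x)))) \<and>
         (\<integral> x. l*m * (x * exp (-((l+m)*x))) \<partial>\<nu>) = l*m*M (l+m)"
proof (cases "l = 0")
  case True then show ?thesis by simp
next
  case False
  then have s: "0 < l + m" using assms by simp
  show ?thesis unfolding M_def using int_xe[OF s] by (auto intro!: integrable_mult_right)
qed

lemma t3: assumes "0 \<le> l" "0 \<le> m"
  shows "integrable (ntilde n) (\<lambda>y. (1 - exp (-(l*y))) - (1 - exp (-((l+m)*y)))) \<and>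
         (\<integral> y. (1 - exp (-(l*y))) - (1 - exp (-((l+m)*y))) \<partial>ntilde n) = J l - J (l+m)"
proof -
  have i1: "integrable (ntilde n) (\<lambda>y. 1 - exp (-(l*y)))" using assms by (intro int_J) simp
  have i2: "integrable (ntilde n) (\<lambda>y. 1 - exp (-((l+m)*y)))" using assms by (intro int_J) simp
  show ?thesis
    using Bochner_Integration.integrable_diff[OF i1 i2] Bochner_Integration.integral_diff[OF i1 i2]
      integral_J[of l] integral_J[of "l+m"] assms by simp
qed

lemma t4: assumes "0 \<le> l" "0 \<le> m"
  shows "integrable \<nu> (\<lambda>x. (l*(J (l+m) - J l)) * (x * exp (-((l+m)*x)))) \<and>
         (\<integral> x. (l*(J (l+m) - J l)) * (x * exp (-((l+m)*x))) \<partial>\<nu>) = l*(J (l+m) - J l)*M (l+m)"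
proof (cases "l = 0")
  case True then show ?thesis by simp
next
  case False
  then have s: "0 < l + m" using assms by simp
  show ?thesis unfolding M_def using int_xe[OF s] by (auto intro!: integrable_mult_right)
qed

lemma iden: assumes "0 \<le> l" "0 \<le> m"
  shows "\<delta>*l*L (l+m) - psi l * M (l+m) = a * (l*m*M (l+m)) + l*(J (l+m) - J l)*M (l+m)"
proof (cases "l = 0")
  case True then show ?thesis by simp
next
  case False
  then have s: "0 < l + m" using assms by simp
  have k: "\<delta> * L (l+m) = D (l+m) * M (l+m)" by (rule key[OF s])
  have p: "psi l = l * D l" unfolding psi_def by (simp add: psi_eq)
  have "\<delta>*l*L (l+m) - psi l * M (l+m) = l * (D (l+m) * M (l+m)) - l * D l * M (l+m)"
    using k p by (simp add: algebra_simps)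
  also have "\<dots> = a * (l*m*M (l+m)) + l*(J (l+m) - J l)*M (l+m)"
    by (simp add: D_def algebra_simps)
  finally show ?thesis .
qed

end

lemma int_double_sum:
  fixes h :: "real \<Rightarrow> real \<Rightarrow> 'a \<Rightarrow> real"
  assumes S: "finite S" and T: "finite T" and int: "\<And>l m. l \<in> S \<Longrightarrow> m \<in> T \<Longrightarrow> integrable M (h l m)"
  shows "integrable M (\<lambda>x. \<Sum>l\<in>S. \<Sum>m\<in>T. w l m * h l m x)"
    and "(\<integral> x. (\<Sum>l\<in>S. \<Sum>m\<in>T. w l m * h l m x) \<partial>M) = (\<Sum>l\<in>S. \<Sum>m\<in>T. w l m * (\<integral> x. h l m x \<partial>M))"
proof -
  show "integrable M (\<lambda>x. \<Sum>l\<in>S. \<Sum>m\<in>T. w l m * h l m x)"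
    using int by (intro Bochner_Integration.integrable_sum integrable_mult_right) auto
  have "(\<integral> x. (\<Sum>l\<in>S. \<Sum>m\<in>T. w l m * h l m x) \<partial>M) = (\<Sum>l\<in>S. (\<integral> x. (\<Sum>m\<in>T. w l m * h l m x) \<partial>M))"
    using int by (intro Bochner_Integration.integral_sum Bochner_Integration.integrable_sum integrable_mult_right) auto
  also have "\<dots> = (\<Sum>l\<in>S. \<Sum>m\<in>T. w l m * (\<integral> x. h l m x \<partial>M))"
    using int by (intro sum.cong refl) (subst Bochner_Integration.integral_sum, auto intro!: integrable_mult_right)
  finally show "(\<integral> x. (\<Sum>l\<in>S. \<Sum>m\<in>T. w l m * h l m x) \<partial>M) = (\<Sum>l\<in>S. \<Sum>m\<in>T. w l m * (\<integral> x. h l m x \<partial>M))" .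
qed


context cbci3
begin

lemma main:
  assumes S: "finite S" "S \<subseteq> {0..}" and T: "finite T" "T \<subseteq> {0..}"
    and f: "f = (\<lambda>x. \<Sum>l\<in>S. c l * exp (- l * x))" and g: "g = (\<lambda>x. \<Sum>m\<in>T. d m * exp (- m * x))"
  shows "dirichlet a b n \<delta> \<nu> f g =
           a * (\<integral> x. x * deriv f x * deriv g x \<partial>\<nu>)
         + (\<integral> x. x * (\<integral> y. deriv f (x + y) * (g (x + y) - g x) \<partial>ntilde n) \<partial>\<nu>)"
proof -
  have df: "deriv f = (\<lambda>x. \<Sum>l\<in>S. (c l * (-l)) * exp (- l * x))" unfolding f by (rule deriv_expsum[OF S(1)])
  have dg: "deriv g = (\<lambda>x. \<Sum>m\<in>T. (d m * (-m)) * exp (- m * x))" unfolding g by (rule deriv_expsum[OF T(1)])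
  have ex1: "exp (- l * x) = exp (-(l*x))" for l x :: real by simp
  have ex2: "exp (-((l+m)*x)) = exp (-(l*x)) * exp (-(m*x))" for l m x :: real
    by (simp add: exp_add[symmetric] algebra_simps)
  have ex3: "exp (-(l*(x+y))) = exp (-(l*x)) * exp (-(l*y))" for l x y :: real
    by (simp add: exp_add[symmetric] algebra_simps)
  have lm: "0 \<le> l" "0 \<le> m" if "l \<in> S" "m \<in> T" for l m using that S T by auto
  have pw1: "(- gen a b n \<delta> f x) * g x = (\<Sum>l\<in>S. \<Sum>m\<in>T. (c l * d m) * (exp (-((l+m)*x)) * (\<delta>*l - x*psi l)))" for x
  proof -
    have "gen a b n \<delta> f x = (\<Sum>l\<in>S. c l * exp (-(l*x)) * (x * psi l - \<delta> * l))"
      unfolding f by (rule gen_expsum[OF S])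
    then have "(- gen a b n \<delta> f x) * g x = (\<Sum>l\<in>S. - (c l * exp (-(l*x)) * (x * psi l - \<delta> * l))) * (\<Sum>m\<in>T. d m * exp (- m * x))"
      by (simp add: g sum_negf)
    also have "\<dots> = (\<Sum>l\<in>S. \<Sum>m\<in>T. (- (c l * exp (-(l*x)) * (x * psi l - \<delta> * l))) * (d m * exp (- m * x)))"
      by (rule sum_product)
    also have "\<dots> = (\<Sum>l\<in>S. \<Sum>m\<in>T. (c l * d m) * (exp (-((l+m)*x)) * (\<delta>*l - x*psi l)))"
      unfolding ex1 ex2 by (intro sum.cong refl) (simp add: algebra_simps)
    finally show ?thesis .
  qed
  have lhs: "dirichlet a b n \<delta> \<nu> f g = (\<Sum>l\<in>S. \<Sum>m\<in>T. (c l * d m) * (\<delta>*l*L (l+m) - psi l * M (l+m)))"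
    unfolding dirichlet_def pw1
    using int_double_sum(2)[OF S(1) T(1), of \<nu> "\<lambda>l m x. exp (-((l+m)*x)) * (\<delta>*l - x*psi l)" "\<lambda>l m. c l * d m"]
      t1 lm by simp
  have pw2: "x * deriv f x * deriv g x = (\<Sum>l\<in>S. \<Sum>m\<in>T. (c l * d m) * (l*m * (x * exp (-((l+m)*x)))))" for x
  proof -
    have "x * deriv f x * deriv g x = (\<Sum>l\<in>S. x * ((c l * (-l)) * exp (- l * x))) * (\<Sum>m\<in>T. (d m * (-m)) * exp (- m * x))"
      by (simp add: df dg sum_distrib_left)
    also have "\<dots> = (\<Sum>l\<in>S. \<Sum>m\<in>T. (x * ((c l * (-l)) * exp (- l * x))) * ((d m * (-m)) * exp (- m * x)))"
      by (rule sum_product)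
    also have "\<dots> = (\<Sum>l\<in>S. \<Sum>m\<in>T. (c l * d m) * (l*m * (x * exp (-((l+m)*x)))))"
      unfolding ex1 ex2 by (intro sum.cong refl) (simp add: algebra_simps)
    finally show ?thesis .
  qed
  have r1: "(\<integral> x. x * deriv f x * deriv g x \<partial>\<nu>) = (\<Sum>l\<in>S. \<Sum>m\<in>T. (c l * d m) * (l*m*M (l+m)))"
  proof -
    have i: "\<And>l m. l \<in> S \<Longrightarrow> m \<in> T \<Longrightarrow> integrable \<nu> (\<lambda>x. l*m * (x * exp (-((l+m)*x))))"
      using t2 lm by blast
    have e: "\<And>l m. l \<in> S \<Longrightarrow> m \<in> T \<Longrightarrow> (\<integral> x. l*m * (x * exp (-((l+m)*x))) \<partial>\<nu>) = l*m*M (l+m)"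
      using t2 lm by blast
    have "(\<integral> x. (\<Sum>l\<in>S. \<Sum>m\<in>T. (c l * d m) * (l*m * (x * exp (-((l+m)*x))))) \<partial>\<nu>) =
        (\<Sum>l\<in>S. \<Sum>m\<in>T. (c l * d m) * (\<integral> x. l*m * (x * exp (-((l+m)*x))) \<partial>\<nu>))"
      by (rule int_double_sum(2)[OF S(1) T(1) i])
    also have "\<dots> = (\<Sum>l\<in>S. \<Sum>m\<in>T. (c l * d m) * (l*m*M (l+m)))"
      by (intro sum.cong refl) (simp only: e)
    finally show ?thesis unfolding pw2 .
  qed
  have pw3: "deriv f (x + y) * (g (x + y) - g x) =
      (\<Sum>l\<in>S. \<Sum>m\<in>T. (c l * d m * ((-l) * exp (-((l+m)*x)))) * ((1 - exp (-(l*y))) - (1 - exp (-((l+m)*y)))))" for x y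
  proof -
    have "deriv f (x + y) * (g (x + y) - g x) =
        (\<Sum>l\<in>S. (c l * (-l)) * exp (- l * (x + y))) * (\<Sum>m\<in>T. d m * exp (- m * (x + y)) - d m * exp (- m * x))"
      by (simp add: df g sum_subtractf)
    also have "\<dots> = (\<Sum>l\<in>S. \<Sum>m\<in>T. ((c l * (-l)) * exp (- l * (x + y))) * (d m * exp (- m * (x + y)) - d m * exp (- m * x)))"
      by (rule sum_product)
    also have "\<dots> = (\<Sum>l\<in>S. \<Sum>m\<in>T. (c l * d m * ((-l) * exp (-((l+m)*x)))) * ((1 - exp (-(l*y))) - (1 - exp (-((l+m)*y)))))"
      unfolding ex1 ex2 ex3 by (intro sum.cong refl) (simp add: algebra_simps)
    finally show ?thesis .
  qed
  have inner: "x * (\<integral> y. deriv f (x + y) * (g (x + y) - g x) \<partial>ntilde n) =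
      (\<Sum>l\<in>S. \<Sum>m\<in>T. (c l * d m) * ((l*(J (l+m) - J l)) * (x * exp (-((l+m)*x)))))" for x
  proof -
    have "(\<integral> y. deriv f (x + y) * (g (x + y) - g x) \<partial>ntilde n) =
        (\<Sum>l\<in>S. \<Sum>m\<in>T. (c l * d m * ((-l) * exp (-((l+m)*x)))) * (J l - J (l+m)))"
      unfolding pw3
      using int_double_sum(2)[OF S(1) T(1), of "ntilde n" "\<lambda>l m y. (1 - exp (-(l*y))) - (1 - exp (-((l+m)*y)))"
          "\<lambda>l m. c l * d m * ((-l) * exp (-((l+m)*x)))"]
        t3 lm by simp
    then show ?thesis
      by (simp add: sum_distrib_left algebra_simps)
  qed
  have r2: "(\<integral> x. x * (\<integral> y. deriv f (x + y) * (g (x + y) - g x) \<partial>ntilde n) \<partial>\<nu>) =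
      (\<Sum>l\<in>S. \<Sum>m\<in>T. (c l * d m) * (l*(J (l+m) - J l)*M (l+m)))"
  proof -
    have i: "\<And>l m. l \<in> S \<Longrightarrow> m \<in> T \<Longrightarrow> integrable \<nu> (\<lambda>x. (l*(J (l+m) - J l)) * (x * exp (-((l+m)*x))))"
      using t4 lm by blast
    have e: "\<And>l m. l \<in> S \<Longrightarrow> m \<in> T \<Longrightarrow> (\<integral> x. (l*(J (l+m) - J l)) * (x * exp (-((l+m)*x))) \<partial>\<nu>) = l*(J (l+m) - J l)*M (l+m)"
      using t4 lm by blast
    have "(\<integral> x. (\<Sum>l\<in>S. \<Sum>m\<in>T. (c l * d m) * ((l*(J (l+m) - J l)) * (x * exp (-((l+m)*x))))) \<partial>\<nu>) =
        (\<Sum>l\<in>S. \<Sum>m\<in>T. (c l * d m) * (\<integral> x. (l*(J (l+m) - J l)) * (x * exp (-((l+m)*x))) \<partial>\<nu>))"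
      by (rule int_double_sum(2)[OF S(1) T(1) i])
    also have "\<dots> = (\<Sum>l\<in>S. \<Sum>m\<in>T. (c l * d m) * (l*(J (l+m) - J l)*M (l+m)))"
      by (intro sum.cong refl) (simp only: e)
    finally show ?thesis unfolding inner .
  qed
  have termw: "c l * d m * (\<delta>*l*L (l+m) - psi l * M (l+m)) =
      a * (c l * d m * (l*m*M (l+m))) + c l * d m * (l*(J (l+m) - J l)*M (l+m))" if "l \<in> S" "m \<in> T" for l m
  proof -
    have "c l * d m * (\<delta>*l*L (l+m) - psi l * M (l+m)) = c l * d m * (a * (l*m*M (l+m)) + l*(J (l+m) - J l)*M (l+m))"
      using iden[OF lm[OF that]] by simp
    also have "\<dots> = a * (c l * d m * (l*m*M (l+m))) + c l * d m * (l*(J (l+m) - J l)*M (l+m))"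
      by (simp add: algebra_simps)
    finally show ?thesis .
  qed
  show ?thesis unfolding lhs r1 r2 sum_distrib_left sum.distrib[symmetric]
    by (intro sum.cong refl) (simp add: termw)
qed

end

theorem proposition3p2:
  fixes a b \<delta> :: real and n \<nu> :: "real measure"
  assumes a: "a \<ge> 0" and b: "b \<ge> 0"
    and n_sets: "sets n = sets borel" and n_supp: "emeasure n {..0} = 0"
    and n_int: "(\<integral>\<^sup>+ y. ennreal (min (y\<^sup>2) y) \<partial>n) < \<infinity>"
    and Phi1: "Phi a b n 1 < \<infinity>"
    and delta: "\<delta> > 0"
    and nu_prob: "prob_space \<nu>" and nu_sets: "sets \<nu> = sets borel"
    and nu_supp: "emeasure \<nu> {..<0} = 0"
    and nu_laplace: "\<And>lam. lam \<ge> 0 \<Longrightarrow>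
        (\<integral> x. exp (- lam * x) \<partial>\<nu>) = exp (- \<delta> * enn2real (Phi a b n lam))"
    and f: "f \<in> F0" and g: "g \<in> F0"
  shows "dirichlet a b n \<delta> \<nu> f g =
           a * (\<integral> x. x * deriv f x * deriv g x \<partial>\<nu>)
         + (\<integral> x. x * (\<integral> y. deriv f (x + y) * (g (x + y) - g x) \<partial>ntilde n) \<partial>\<nu>)"
  proof -
  interpret C: cbci3 a b n \<delta> \<nu>
    by (intro cbci3.intro cbci2.intro cbci.intro cbci2_axioms.intro cbci3_axioms.intro) (fact assms)+
  from f obtain S c where S: "finite S" "S \<subseteq> {0..}" and fS: "f = (\<lambda>x. \<Sum>l\<in>S. c l * exp (- l * x))"
    unfolding F0_def by blast
  from g obtain T d where T: "finite T" "T \<subseteq> {0..}" and gT: "g = (\<lambda>x. \<Sum>l\<in>T. d l * exp (- l * x))"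
    unfolding F0_def by blast
  show ?thesis by (rule C.main[OF S T fS gT])
qed

end
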